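(* Let $\mathcal{M}$ be a discounted Markov decision process with finite state space $\mathcal{S}$, action space $\mathcal{A}$, transition kernel $P(s'|s,a)$, cost function $c(s,a)$ and discount factor $\gamma\in[0,1)$, and let $\hat{\mathcal{M}}$ be an MDP on the same state and action spaces with transition kernel $\hat P$ and cost $\hat c$ such that for all $(s,a)$, $\|\hat P(\cdot|s,a)-P(\cdot|s,a)\|_1\le\alpha$ and $|\hat c(s,a)-c(s,a)|\le\alpha$. Let $\pi^*$ be an optimal (cost-minimizing) policy on $\mathcal{M}$ with value function $V^{\pi^*}_{\mathcal{M}}(s)=\mathbb{E}\left[\sum_{t\ge0}\gamma^t c(s_t,a_t)\mid s_0=s\right]$, and let $V_{\min}\le V^{\pi^*}_{\mathcal{M}}\le V_{\max}$ and $c_{\min}\le c\le c_{\max}$. For a horizon $H\ge1$, a policy $\pi$, a terminal function $V$ and an MDP $\mathcal{N}$ with cost $c_{\mathcal{N}}$, define for each start state $s_0$ $$J^{\pi}_{\mathcal{N},V,H}(s_0)=\mathbb{E}_{\pi,\mathcal{N}}\left[\sum_{i=0}^{H-1}\gamma^i c_{\mathcal{N}}(s_i,a_i)+\gamma^H V(s_H)\right],$$ where the expectation is over trajectories obtained by executing $\pi$ in $\mathcal{N}$ from $s_0$. Then for any policy $\pi$, $$\left\|J^{\pi}_{\mathcal{M},V^{\pi^*}_{\mathcal{M}},H}-J^{\pi}_{\hat{\mathcal{M}},V^{\pi^*}_{\mathcal{M}},H}\right\|_\infty\le\gamma\frac{1-\gamma^{H-1}}{1-\gamma}\,\alpha H\,\frac{c_{\max}-c_{\min}}{2}+\gamma^H\alpha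 H\,\frac{V_{\max}-V_{\min}}{2}+\frac{1-\gamma^H}{1-\gamma}\alpha,$$ where the $\infty$-norm is taken over the start state $s_0$.
   Context: Costs are minimized. In $J^{\pi}_{\mathcal{M},\cdot,H}$ the running cost is $c$ and transitions follow $P$; in $J^{\pi}_{\hat{\mathcal{M}},\cdot,H}$ the running cost is $\hat c$ and transitions follow $\hat P$; in both the terminal cost is the true optimal value function $V^{\pi^*}_{\mathcal{M}}$. *)

theory Defs
  imports "HOL-Probability.Probability"
begin

text \<open>A (general, history-dependent, randomized) policy maps the history of past
  state-action pairs and the current state to a distribution over actions.\<close>

type_synonym ('s, 'a) policy = "('s \<times> 'a) list \<Rightarrow> 's \<Rightarrow> 'a pmf"

fun Jaux :: "('s \<Rightarrow> 'a \<Rightarrow> 's pmf) \<Rightarrow> ('s \<Rightarrow> 'a \<Rightarrow> real) \<Rightarrow> real \<Rightarrow> ('s, 'a) policy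
    \<Rightarrow> ('s \<Rightarrow> real) \<Rightarrow> nat \<Rightarrow> ('s \<times> 'a) list \<Rightarrow> 's \<Rightarrow> real" where
  "Jaux P c g pol V 0 h s = V s"
| "Jaux P c g pol V (Suc k) h s =
     measure_pmf.expectation (pol h s)
       (\<lambda>a. c s a + g * measure_pmf.expectation (P s a)
                             (\<lambda>s'. Jaux P c g pol V k (h @ [(s, a)]) s'))"

definition Jfun :: "('s \<Rightarrow> 'a \<Rightarrow> 's pmf) \<Rightarrow> ('s \<Rightarrow> 'a \<Rightarrow> real) \<Rightarrow> real \<Rightarrow> ('s, 'a) policy
    \<Rightarrow> ('s \<Rightarrow> real) \<Rightarrow> nat \<Rightarrow> 's \<Rightarrow> real" where
  "Jfun P c g pol V H s0 = Jaux P c g pol V H [] s0"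

definition value_fun :: "('s \<Rightarrow> 'a \<Rightarrow> 's pmf) \<Rightarrow> ('s \<Rightarrow> 'a \<Rightarrow> real) \<Rightarrow> real \<Rightarrow> ('s, 'a) policy
    \<Rightarrow> 's \<Rightarrow> real" where
  "value_fun P c g pol s = lim (\<lambda>n. Jfun P c g pol (\<lambda>_. 0) n s)"

definition optimal_policy :: "('s \<Rightarrow> 'a \<Rightarrow> 's pmf) \<Rightarrow> ('s \<Rightarrow> 'a \<Rightarrow> real) \<Rightarrow> real
    \<Rightarrow> ('s, 'a) policy \<Rightarrow> bool" where
  "optimal_policy P c g polstar \<longleftrightarrow>
     (\<forall>pol s. value_fun P c g polstar s \<le> value_fun P c g pol s)"

end

theory Submission
  imports Defs
begin

lemma S_Suc: "(\<Sum>i<Suc k. (g::real)^i) = 1 + g * (\<Sum>i<k. g^i)"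
  by (simp add: sum.lessThan_Suc_shift sum_distrib_left del: sum.lessThan_Suc)

lemma S_nonneg: "0 \<le> (g::real) \<Longrightarrow> 0 \<le> (\<Sum>i<k. g^i)"
  by (simp add: sum_nonneg)

lemma S_pred: "0 \<le> (g::real) \<Longrightarrow> g * (\<Sum>i<k-1. g^i) \<le> (\<Sum>i<k. g^i)"
proof (cases k)
  case (Suc j)
  assume "0 \<le> g"
  then show ?thesis using Suc S_Suc[where k=j and g=g] by simp
qed simp

lemma exp_integrable:
  fixes f :: "'b \<Rightarrow> real"
  assumes "\<And>x. \<bar>f x\<bar> \<le> B"
  shows "integrable (measure_pmf p) f"
  by (rule measure_pmf.integrable_const_bound[where B=B]) (use assms in auto)

lemma exp_bounds:
  fixes f :: "'b \<Rightarrow> real"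
  assumes "\<And>x. l \<le> f x" "\<And>x. f x \<le> u"
  shows "l \<le> measure_pmf.expectation p f \<and> measure_pmf.expectation p f \<le> u"
proof -
  have "\<And>x. \<bar>f x\<bar> \<le> max \<bar>l\<bar> \<bar>u\<bar>" using assms by (smt (verit))
  then have i: "integrable (measure_pmf p) f" by (rule exp_integrable)
  show ?thesis
    using measure_pmf.integral_ge_const[OF i, of l] measure_pmf.integral_le_const[OF i, of u] assms
    by auto
qed

lemma exp_abs_bound:
  fixes f :: "'b \<Rightarrow> real"
  assumes "\<And>x. \<bar>f x\<bar> \<le> B"
  shows "\<bar>measure_pmf.expectation p f\<bar> \<le> B"
proof -
  have "- B \<le> f x" "f x \<le> B" for x using assms[of x] by (auto simp: abs_le_iff)
  from exp_bounds[of "- B" f B p, OF this] show ?thesis by (auto simp: abs_le_iff)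
qed

lemma exp_fin: "measure_pmf.expectation (p :: 's::finite pmf) f = (\<Sum>s\<in>UNIV. f s * pmf p s)"
  by (rule integral_measure_pmf_real) auto

lemma Jaux_bnd:
  assumes "0 \<le> g" "\<And>s a. lo \<le> c s a" "\<And>s a. c s a \<le> hi" "\<And>s. vl \<le> V s" "\<And>s. V s \<le> vh"
  shows "lo * (\<Sum>i<k. g^i) + g^k * vl \<le> Jaux P c g pol V k h s
       \<and> Jaux P c g pol V k h s \<le> hi * (\<Sum>i<k. g^i) + g^k * vh"
proof (induction k arbitrary: h s)
  case 0
  then show ?case using assms by simp
next
  case (Suc k)
  let ?L = "lo * (\<Sum>i<k. g^i) + g^k * vl" and ?U = "hi * (\<Sum>i<k. g^i) + g^k * vh"
  have inner: "?L \<le> measure_pmf.expectation (P s a) (\<lambda>s'. Jaux P c g pol V k (h @ [(s, a)]) s')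
     \<and> measure_pmf.expectation (P s a) (\<lambda>s'. Jaux P c g pol V k (h @ [(s, a)]) s') \<le> ?U" for a
    by (rule exp_bounds) (use Suc in auto)
  have "lo + g * ?L \<le> c s a + g * measure_pmf.expectation (P s a) (\<lambda>s'. Jaux P c g pol V k (h @ [(s, a)]) s')
     \<and> c s a + g * measure_pmf.expectation (P s a) (\<lambda>s'. Jaux P c g pol V k (h @ [(s, a)]) s') \<le> hi + g * ?U" for a
    using inner[of a] assms(1) assms(2,3)[of s a] mult_left_mono[OF _ assms(1)] by (smt (verit))
  then have "lo + g * ?L \<le> Jaux P c g pol V (Suc k) h s \<and> Jaux P c g pol V (Suc k) h s \<le> hi + g * ?U"
    unfolding Jaux.simps by (intro exp_bounds) auto
  then show ?case by (simp add: S_Suc algebra_simps del: sum.lessThan_Suc)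
qed

lemma l1_lemma:
  fixes p q :: "'s::finite pmf"
  assumes "(\<Sum>s'\<in>UNIV. \<bar>pmf q s' - pmf p s'\<bar>) \<le> alpha" "\<And>s. L \<le> f s" "\<And>s. f s \<le> U"
  shows "\<bar>(\<Sum>s\<in>UNIV. f s * pmf p s) - (\<Sum>s\<in>UNIV. f s * pmf q s)\<bar> \<le> alpha * (U - L) / 2"
proof -
  define m where "m = (L + U) / 2"
  have p1: "(\<Sum>s\<in>UNIV. pmf p s) = 1" and q1: "(\<Sum>s\<in>UNIV. pmf q s) = 1"
    by (auto intro: sum_pmf_eq_1)
  have "(\<Sum>s\<in>UNIV. f s * pmf p s) - (\<Sum>s\<in>UNIV. f s * pmf q s)
      = (\<Sum>s\<in>UNIV. (f s - m) * (pmf p s - pmf q s))"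
  proof -
    have "(\<Sum>s\<in>UNIV. (f s - m) * (pmf p s - pmf q s))
       = (\<Sum>s\<in>UNIV. f s * pmf p s) - (\<Sum>s\<in>UNIV. f s * pmf q s) - m * ((\<Sum>s\<in>UNIV. pmf p s) - (\<Sum>s\<in>UNIV. pmf q s))"
      by (simp add: algebra_simps sum_subtractf sum_distrib_left sum.distrib)
    then show ?thesis using p1 q1 by simp
  qed
  also have "\<bar>\<dots>\<bar> \<le> (\<Sum>s\<in>UNIV. \<bar>(f s - m) * (pmf p s - pmf q s)\<bar>)"
    by (rule sum_abs)
  also have "\<dots> \<le> (\<Sum>s\<in>UNIV. (U - L) / 2 * \<bar>pmf q s - pmf p s\<bar>)"
  proof (rule sum_mono)
    fix s
    have "\<bar>f s - m\<bar> \<le> (U - L) / 2" using assms(2,3)[of s] unfolding m_def by (auto simp: abs_if field_simps)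
    then show "\<bar>(f s - m) * (pmf p s - pmf q s)\<bar> \<le> (U - L) / 2 * \<bar>pmf q s - pmf p s\<bar>"
      unfolding abs_mult by (subst abs_minus_commute[of "pmf q s"]) (intro mult_right_mono, auto)
  qed
  also have "\<dots> = (U - L) / 2 * (\<Sum>s\<in>UNIV. \<bar>pmf q s - pmf p s\<bar>)"
    by (simp add: sum_distrib_left)
  also have "\<dots> \<le> (U - L) / 2 * alpha"
    using assms(1) assms(2,3)[of undefined] by (intro mult_left_mono) auto
  finally show ?thesis by (simp add: mult.commute)
qed

lemma q_lemma:
  fixes q :: "'s::finite pmf"
  assumes "\<And>s. \<bar>d s\<bar> \<le> B"
  shows "\<bar>\<Sum>s\<in>UNIV. d s * pmf q s\<bar> \<le> B"
proof -
  have "\<bar>\<Sum>s\<in>UNIV. d s * pmf q s\<bar> \<le> (\<Sum>s\<in>UNIV. \<bar>d s * pmf q s\<bar>)" by (rule sum_abs)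
  also have "\<dots> \<le> (\<Sum>s\<in>UNIV. B * pmf q s)"
    by (intro sum_mono) (simp add: abs_mult mult_right_mono assms)
  also have "\<dots> = B" by (simp add: sum_distrib_left[symmetric] sum_pmf_eq_1)
  finally show ?thesis .
qed

lemma diff_bound:
  fixes P Ph :: "'s::finite \<Rightarrow> 'a \<Rightarrow> 's pmf"
    and c ch :: "'s \<Rightarrow> 'a \<Rightarrow> real" and V :: "'s \<Rightarrow> real"
  assumes g0: "0 \<le> g"
    and l1: "\<And>s a. (\<Sum>s'\<in>UNIV. \<bar>pmf (Ph s a) s' - pmf (P s a) s'\<bar>) \<le> alpha"
    and cc: "\<And>s a. \<bar>ch s a - c s a\<bar> \<le> alpha"
    and Vb: "\<And>s. Vmin \<le> V s" "\<And>s. V s \<le> Vmax"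
    and cb: "\<And>s a. cmin \<le> c s a" "\<And>s a. c s a \<le> cmax"
  shows "\<bar>Jaux P c g pol V k h s - Jaux Ph ch g pol V k h s\<bar>
     \<le> alpha * (\<Sum>i<k. g^i) + real k * g^k * alpha * (Vmax - Vmin) / 2
       + real k * g * (\<Sum>i<k-1. g^i) * alpha * (cmax - cmin) / 2"
proof (induction k arbitrary: h s)
  case 0
  then show ?case by simp
next
  case (Suc k)
  define B where "B = alpha * (\<Sum>i<k. g^i) + real k * g^k * alpha * (Vmax - Vmin) / 2
       + real k * g * (\<Sum>i<k-1. g^i) * alpha * (cmax - cmin) / 2"
  define S where "S = (\<Sum>i<k. g^i)"
  define L where "L = cmin * S + g^k * Vmin"
  define U where "U = cmax * S + g^k * Vmax"
  have a0: "0 \<le> alpha" using cc[of undefined undefined] by linarith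
  have chb: "cmin - alpha \<le> ch s a" "ch s a \<le> cmax + alpha" for s a
    using cc[of s a] cb[of s a] by (auto simp: abs_le_iff)
  obtain B1 where B1: "\<And>h s. \<bar>Jaux P c g pol V k h s\<bar> \<le> B1"
    using Jaux_bnd[OF g0 cb Vb, where k=k and P=P and pol=pol] by (meson abs_le_iff order.trans max.cobounded1 max.cobounded2 neg_le_iff_le)
  obtain B2 where B2: "\<And>h s. \<bar>Jaux Ph ch g pol V k h s\<bar> \<le> B2"
    using Jaux_bnd[OF g0 chb Vb, where k=k and P=Ph and pol=pol] by (meson abs_le_iff order.trans max.cobounded1 max.cobounded2 neg_le_iff_le)
  define f1 where "f1 = (\<lambda>a. c s a + g * measure_pmf.expectation (P s a) (\<lambda>s'. Jaux P c g pol V k (h @ [(s, a)]) s'))"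
  define f2 where "f2 = (\<lambda>a. ch s a + g * measure_pmf.expectation (Ph s a) (\<lambda>s'. Jaux Ph ch g pol V k (h @ [(s, a)]) s'))"
  have e1: "\<bar>measure_pmf.expectation (P s a) (\<lambda>s'. Jaux P c g pol V k (h @ [(s, a)]) s')\<bar> \<le> B1" for a
    by (rule exp_abs_bound) (rule B1)
  have e2: "\<bar>measure_pmf.expectation (Ph s a) (\<lambda>s'. Jaux Ph ch g pol V k (h @ [(s, a)]) s')\<bar> \<le> B2" for a
    by (rule exp_abs_bound) (rule B2)
  have i1: "integrable (measure_pmf (pol h s)) f1"
  proof (rule exp_integrable)
    fix a
    have "\<bar>g * measure_pmf.expectation (P s a) (\<lambda>s'. Jaux P c g pol V k (h @ [(s, a)]) s')\<bar> \<le> g * B1"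
      using e1[of a] g0 by (simp add: abs_mult mult_left_mono)
    then show "\<bar>f1 a\<bar> \<le> \<bar>cmin\<bar> + \<bar>cmax\<bar> + g * B1"
      unfolding f1_def using cb[of s a] by (smt (verit))
  qed
  have i2: "integrable (measure_pmf (pol h s)) f2"
  proof (rule exp_integrable)
    fix a
    have "\<bar>g * measure_pmf.expectation (Ph s a) (\<lambda>s'. Jaux Ph ch g pol V k (h @ [(s, a)]) s')\<bar> \<le> g * B2"
      using e2[of a] g0 by (simp add: abs_mult mult_left_mono)
    then show "\<bar>f2 a\<bar> \<le> \<bar>cmin - alpha\<bar> + \<bar>cmax + alpha\<bar> + g * B2"
      unfolding f2_def using chb[of s a] by (smt (verit))
  qed
  define X where "X = alpha + g * (alpha * (U - L) / 2 + B)"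
  have pt: "\<bar>f1 a - f2 a\<bar> \<le> X" for a
  proof -
    let ?J = "\<lambda>s'. Jaux P c g pol V k (h @ [(s, a)]) s'"
    let ?Jh = "\<lambda>s'. Jaux Ph ch g pol V k (h @ [(s, a)]) s'"
    have JL: "L \<le> ?J s'" "?J s' \<le> U" for s'
      using Jaux_bnd[OF g0 cb Vb, where k=k and P=P and pol=pol and h="h @ [(s, a)]" and s=s'] unfolding L_def U_def S_def by auto
    have t1: "\<bar>(\<Sum>s'\<in>UNIV. ?J s' * pmf (P s a) s') - (\<Sum>s'\<in>UNIV. ?J s' * pmf (Ph s a) s')\<bar>
        \<le> alpha * (U - L) / 2"
      by (rule l1_lemma[OF l1 JL])
    have t2: "\<bar>\<Sum>s'\<in>UNIV. (?J s' - ?Jh s') * pmf (Ph s a) s'\<bar> \<le> B"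
      by (rule q_lemma) (use Suc.IH in \<open>simp add: B_def\<close>)
    have split: "(\<Sum>s'\<in>UNIV. ?J s' * pmf (P s a) s') - (\<Sum>s'\<in>UNIV. ?Jh s' * pmf (Ph s a) s')
       = ((\<Sum>s'\<in>UNIV. ?J s' * pmf (P s a) s') - (\<Sum>s'\<in>UNIV. ?J s' * pmf (Ph s a) s'))
         + (\<Sum>s'\<in>UNIV. (?J s' - ?Jh s') * pmf (Ph s a) s')"
      by (simp add: algebra_simps sum_subtractf)
    have inner: "\<bar>measure_pmf.expectation (P s a) ?J - measure_pmf.expectation (Ph s a) ?Jh\<bar>
        \<le> alpha * (U - L) / 2 + B"
      unfolding exp_fin split using t1 t2 by linarith
    have "f1 a - f2 a = (c s a - ch s a) + g * (measure_pmf.expectation (P s a) ?J - measure_pmf.expectation (Ph s a) ?Jh)"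
      unfolding f1_def f2_def by (simp add: algebra_simps)
    also have "\<bar>\<dots>\<bar> \<le> alpha + g * (alpha * (U - L) / 2 + B)"
    proof -
      have "\<bar>g * (measure_pmf.expectation (P s a) ?J - measure_pmf.expectation (Ph s a) ?Jh)\<bar>
          \<le> g * (alpha * (U - L) / 2 + B)"
        using inner g0 by (simp add: abs_mult mult_left_mono)
      moreover have "\<bar>c s a - ch s a\<bar> \<le> alpha" using cc[of s a] by linarith
      ultimately show ?thesis by linarith
    qed
    finally show ?thesis unfolding X_def .
  qed
  have "\<bar>Jaux P c g pol V (Suc k) h s - Jaux Ph ch g pol V (Suc k) h s\<bar>
      = \<bar>measure_pmf.expectation (pol h s) (\<lambda>a. f1 a - f2 a)\<bar>"
    using Bochner_Integration.integral_diff[OF i1 i2] by (simp add: f1_def f2_def)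
  also have "\<dots> \<le> X"
    by (rule exp_abs_bound) (rule pt)
  also have "X \<le> alpha * (\<Sum>i<Suc k. g^i) + real (Suc k) * g^Suc k * alpha * (Vmax - Vmin) / 2
       + real (Suc k) * g * (\<Sum>i<Suc k-1. g^i) * alpha * (cmax - cmin) / 2"
  proof -
    have dc: "0 \<le> cmax - cmin" using cb[of undefined undefined] by linarith
    have sp: "g * (\<Sum>i<k-1. g^i) \<le> S" unfolding S_def by (rule S_pred[OF g0])
    have "real k * g * (g * (\<Sum>i<k-1. g^i)) * (alpha * (cmax - cmin)) \<le> real k * g * S * (alpha * (cmax - cmin))"
      using sp g0 a0 dc by (intro mult_right_mono mult_left_mono) auto
    define T where "T = (\<Sum>i<k-1. g^i)"
    define Q where "Q = alpha * (cmax - cmin)"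
    have X_eq: "X = alpha * (1 + g * S) + real (Suc k) * g^Suc k * alpha * (Vmax - Vmin) / 2
        + g * S * Q / 2 + real k * g * (g * T) * Q / 2"
      unfolding X_def B_def U_def L_def S_def[symmetric] T_def[symmetric] Q_def
      by (simp add: field_simps)
    have R_eq: "alpha * (\<Sum>i<Suc k. g^i) + real (Suc k) * g^Suc k * alpha * (Vmax - Vmin) / 2
       + real (Suc k) * g * (\<Sum>i<Suc k-1. g^i) * alpha * (cmax - cmin) / 2
       = alpha * (1 + g * S) + real (Suc k) * g^Suc k * alpha * (Vmax - Vmin) / 2
        + g * S * Q / 2 + real k * g * S * Q / 2"
      unfolding S_Suc S_def Q_def by (simp add: field_simps del: sum.lessThan_Suc)
    show ?thesis
      unfolding X_eq R_eq using \<open>real k * g * (g * (\<Sum>i<k-1. g^i)) * (alpha * (cmax - cmin)) \<le> real k * g * S * (alpha * (cmax - cmin))\<close>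
      unfolding T_def[symmetric] Q_def[symmetric] by linarith
  qed
  finally show ?case .
qed

theorem mainTheorem2:
  fixes P Ph :: "'s::finite \<Rightarrow> 'a \<Rightarrow> 's pmf"
    and c ch :: "'s \<Rightarrow> 'a \<Rightarrow> real"
    and g alpha cmin cmax Vmin Vmax :: real
    and H :: nat
    and polstar pol :: "('s, 'a) policy"
  assumes "0 \<le> g" and "g < 1"
    and "\<forall>s a. (\<Sum>s'\<in>UNIV. \<bar>pmf (Ph s a) s' - pmf (P s a) s'\<bar>) \<le> alpha"
    and "\<forall>s a. \<bar>ch s a - c s a\<bar> \<le> alpha"
    and "optimal_policy P c g polstar"
    and "\<forall>s. Vmin \<le> value_fun P c g polstar s \<and> value_fun P c g polstar s \<le> Vmax"
    and "\<forall>s a. cmin \<le> c s a \<and> c s a \<le> cmax"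
    and "1 \<le> H"
  shows "Max (range (\<lambda>s. \<bar>Jfun P c g pol (value_fun P c g polstar) H s
                           - Jfun Ph ch g pol (value_fun P c g polstar) H s\<bar>))
         \<le> g * (1 - g ^ (H - 1)) / (1 - g) * alpha * real H * (cmax - cmin) / 2
           + g ^ H * alpha * real H * (Vmax - Vmin) / 2
           + (1 - g ^ H) / (1 - g) * alpha"
proof -
  have g1: "g \<noteq> 1" using assms(2) by simp
  have e1: "(\<Sum>i<H. g^i) = (1 - g ^ H) / (1 - g)" and e2: "(\<Sum>i<H-1. g^i) = (1 - g ^ (H-1)) / (1 - g)"
    using g1 by (simp_all add: sum_gp_strict)
  have b: "\<bar>Jfun P c g pol (value_fun P c g polstar) H s - Jfun Ph ch g pol (value_fun P c g polstar) H s\<bar>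
     \<le> g * (1 - g ^ (H - 1)) / (1 - g) * alpha * real H * (cmax - cmin) / 2
           + g ^ H * alpha * real H * (Vmax - Vmin) / 2
           + (1 - g ^ H) / (1 - g) * alpha" for s
  proof -
    have "\<bar>Jfun P c g pol (value_fun P c g polstar) H s - Jfun Ph ch g pol (value_fun P c g polstar) H s\<bar>
      \<le> alpha * (\<Sum>i<H. g^i) + real H * g^H * alpha * (Vmax - Vmin) / 2
       + real H * g * (\<Sum>i<H-1. g^i) * alpha * (cmax - cmin) / 2"
      unfolding Jfun_def
      by (rule diff_bound) (use assms in auto)
    then show ?thesis unfolding e1 e2 by (simp add: algebra_simps)
  qed
  show ?thesis
    by (subst Max_le_iff) (use b in auto)
qed

end
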